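(* Let $P\subseteq\mathbb{R}^d$ be a $d$-dimensional lattice polytope and let $\operatorname{Pyr}(P)=\operatorname{conv}(P\times\{1\},\{0\})\subseteq\mathbb{R}^d\times\mathbb{R}$ be the lattice pyramid over $P$. Then $$\mu^F(\operatorname{Pyr}(P))=\max\{2,\ \mu^F(P)+1\}.$$
   Context: For a $d$-dimensional rational polytope $P\subseteq\mathbb{R}^d$ and $a\in(\mathbb{Z}^d)^*$ let $h_P(a)=\min_{x\in P}\langle a,x\rangle$. For $s>0$ the Fine adjoint polytope is $P^{F(s)}=\{x\in\mathbb{R}^d : \langle a,x\rangle\ge h_P(a)+s \text{ for all } a\in(\mathbb{Z}^d)^*\setminus\{0\}\}$. The Fine $\mathbb{Q}$-codegree is $\mu^F(P)=(\sup\{s>0 : P^{F(s)}\neq\emptyset\})^{-1}$. A lattice polytope has vertices in $\mathbb{Z}^d$. *)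

theory Defs
  imports "HOL-Analysis.Analysis"
begin

text \<open>Ambient space: a Euclidean space with its standard basis; the lattice is the set of
  points with integer coordinates w.r.t. Basis (this models R^d with Z^d).
  Dual lattice vectors a are identified with integer vectors via the inner product.\<close>

definition lattice_pt :: "'a::euclidean_space \<Rightarrow> bool" where
  "lattice_pt x \<longleftrightarrow> (\<forall>b\<in>Basis. x \<bullet> b \<in> \<int>)"

definition lattice_polytope :: "'a::euclidean_space set \<Rightarrow> bool" where
  "lattice_polytope P \<longleftrightarrow>
     (\<exists>V. finite V \<and> V \<noteq> {} \<and> (\<forall>v\<in>V. lattice_pt v) \<and> P = convex hull V)"

definition support_min :: "'a::euclidean_space set \<Rightarrow> 'a \<Rightarrow> real" where
  "support_min P a = Inf ((\<lambda>x. a \<bullet> x) ` P)"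

definition fine_adjoint :: "'a::euclidean_space set \<Rightarrow> real \<Rightarrow> 'a set" where
  "fine_adjoint P s =
     {x. \<forall>a. lattice_pt a \<and> a \<noteq> 0 \<longrightarrow> a \<bullet> x \<ge> support_min P a + s}"

definition fine_codegree :: "'a::euclidean_space set \<Rightarrow> real" where
  "fine_codegree P = inverse (Sup {s. s > 0 \<and> fine_adjoint P s \<noteq> {}})"

definition pyr :: "'a::euclidean_space set \<Rightarrow> ('a \<times> real) set" where
  "pyr P = convex hull ((\<lambda>x. (x, 1)) ` P \<union> {0})"

end

theory Submission
  imports Defs
begin


lemma lat_inner_int:
  assumes "lattice_pt a" "lattice_pt v" shows "a \<bullet> v \<in> \<int>"
proof -
  have "a \<bullet> v = (\<Sum>b\<in>Basis. (a \<bullet> b) * (v \<bullet> b))" by (rule euclidean_inner)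
  also have "\<dots> \<in> \<int>" using assms unfolding lattice_pt_def
    by (intro Ints_sum Ints_mult) auto
  finally show ?thesis .
qed

lemma lat_prod: "lattice_pt ((a::'a::euclidean_space), (t::real)) \<longleftrightarrow> lattice_pt a \<and> t \<in> \<int>"
  unfolding lattice_pt_def by (auto simp: Basis_prod_def inner_Pair)

lemma lat_Basis: "b \<in> (Basis::'a::euclidean_space set) \<Longrightarrow> lattice_pt b \<and> lattice_pt (-b)"
  unfolding lattice_pt_def by (auto simp: inner_Basis)

lemma lat_norm:
  assumes "lattice_pt (a::'a::euclidean_space)" "a \<noteq> 0" shows "norm a \<ge> 1"
proof -
  obtain b where b: "b \<in> Basis" "a \<bullet> b \<noteq> 0" using assms(2) euclidean_all_zero_iff by blast
  have "a \<bullet> b \<in> \<int>" using assms(1) b(1) by (auto simp: lattice_pt_def)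
  then obtain k where k: "a \<bullet> b = of_int k" by (auto elim: Ints_cases)
  then have "k \<noteq> 0" using b(2) by auto
  then have "\<bar>k\<bar> \<ge> 1" by linarith
  then have "\<bar>a \<bullet> b\<bar> \<ge> 1" unfolding k by linarith
  then show ?thesis using Basis_le_norm[OF b(1), of a] by linarith
qed

lemma supp_attained:
  assumes "lattice_polytope P"
  shows "\<exists>v\<in>P. lattice_pt v \<and> support_min P a = a \<bullet> v \<and> (\<forall>p\<in>P. a \<bullet> v \<le> a \<bullet> p)"
proof -
  obtain V where V: "finite V" "V \<noteq> {}" "\<forall>v\<in>V. lattice_pt v" "P = convex hull V"
    using assms unfolding lattice_polytope_def by blast
  define m where "m = Min ((\<lambda>v. a \<bullet> v) ` V)"
  have fin: "finite ((\<lambda>v. a \<bullet> v) ` V)" "(\<lambda>v. a \<bullet> v) ` V \<noteq> {}" using V by auto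
  have "m \<in> (\<lambda>v. a \<bullet> v) ` V" unfolding m_def using fin by (rule Min_in)
  then obtain v0 where v0: "v0 \<in> V" "m = a \<bullet> v0" by blast
  have mle: "\<forall>v\<in>V. m \<le> a \<bullet> v" unfolding m_def using fin(1) by simp
  have "V \<subseteq> {x. a \<bullet> x \<ge> m}" using mle by blast
  then have sub0: "convex hull V \<subseteq> {x. a \<bullet> x \<ge> m}"
    by (simp add: hull_minimal convex_halfspace_ge)
  have sub: "P \<subseteq> {x. a \<bullet> x \<ge> m}" using sub0 V(4) by simp
  have v0P: "v0 \<in> P" using hull_inc[of v0 V convex] v0(1) V(4) by simp
  have bdd: "bdd_below ((\<bullet>) a ` P)" using sub unfolding bdd_below_def by blast
  have "support_min P a = m"
    unfolding support_min_def
  proof (rule antisym)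
    have "a \<bullet> v0 \<in> (\<bullet>) a ` P" using v0P by blast
    then show "Inf ((\<bullet>) a ` P) \<le> m" unfolding v0(2) using bdd by (rule cInf_lower)
    have ne: "(\<bullet>) a ` P \<noteq> {}" using v0P by blast
    show "m \<le> Inf ((\<bullet>) a ` P)"
    proof (rule cInf_greatest[OF ne])
      fix y assume "y \<in> (\<bullet>) a ` P"
      then show "m \<le> y" using sub by blast
    qed
  qed
  moreover have "\<forall>p\<in>P. a \<bullet> v0 \<le> a \<bullet> p" using sub v0(2) by blast
  moreover have "lattice_pt v0" using V(3) v0(1) by blast
  ultimately show ?thesis using v0P v0(2) by blast
qed
lemma pyr_supp:
  assumes "lattice_polytope P"
  shows "support_min (pyr P) (a, t) = min 0 (support_min P a + t)"
proof -
  obtain v0 where v0: "v0 \<in> P" "support_min P a = a \<bullet> v0" "\<forall>p\<in>P. a \<bullet> v0 \<le> a \<bullet> p"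
    using supp_attained[OF assms, of a] by blast
  define m where "m = min 0 (support_min P a + t)"
  have gen: "(\<lambda>x. (x, 1::real)) ` P \<union> {0} \<subseteq> {z. (a, t) \<bullet> z \<ge> m}"
  proof
    fix z assume "z \<in> (\<lambda>x. (x, 1::real)) ` P \<union> {0}"
    then consider x where "x \<in> P" "z = (x, 1)" | "z = 0" by blast
    then show "z \<in> {z. (a, t) \<bullet> z \<ge> m}"
    proof cases
      case 1
      then have "a \<bullet> v0 \<le> a \<bullet> x" using v0 by blast
      then show ?thesis using 1 v0(2) unfolding m_def by (simp add: inner_Pair)
    next
      case 2 then show ?thesis unfolding m_def by simp
    qed
  qed
  have sub: "pyr P \<subseteq> {z. (a, t) \<bullet> z \<ge> m}" unfolding pyr_def
    using gen by (simp add: hull_minimal convex_halfspace_ge)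
  have z0: "0 \<in> pyr P" unfolding pyr_def by (rule hull_inc) simp
  have z1: "(v0, 1) \<in> pyr P" unfolding pyr_def by (rule hull_inc) (use v0 in blast)
  have bdd: "bdd_below ((\<bullet>) (a, t) ` pyr P)" using sub unfolding bdd_below_def by blast
  have "Inf ((\<bullet>) (a, t) ` pyr P) = m"
  proof (rule antisym)
    show "m \<le> Inf ((\<bullet>) (a, t) ` pyr P)" using z0 sub by (intro cInf_greatest) auto
    have "(a, t) \<bullet> 0 \<in> (\<bullet>) (a, t) ` pyr P" using z0 by blast
    then have i0: "Inf ((\<bullet>) (a, t) ` pyr P) \<le> (a, t) \<bullet> 0"
      using bdd by (rule cInf_lower)
    have "(a, t) \<bullet> (v0, 1) \<in> (\<bullet>) (a, t) ` pyr P" using z1 by blast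
    then have i1: "Inf ((\<bullet>) (a, t) ` pyr P) \<le> (a, t) \<bullet> (v0, 1)"
      using bdd by (rule cInf_lower)
    show "Inf ((\<bullet>) (a, t) ` pyr P) \<le> m" using i0 i1 v0(2) unfolding m_def
      by (auto simp: inner_Pair min_def)
  qed
  then show ?thesis unfolding support_min_def m_def .
qed

lemma SP_nonempty:
  fixes P :: "'a::euclidean_space set"
  assumes "lattice_polytope P" "aff_dim P = int DIM('a)"
  shows "\<exists>s>0. fine_adjoint P s \<noteq> {}"
proof -
  obtain V where V: "finite V" "V \<noteq> {}" "P = convex hull V"
    using assms unfolding lattice_polytope_def by blast
  have "convex P" "P \<noteq> {}" using V by auto
  then have "rel_interior P \<noteq> {}" by (simp add: rel_interior_eq_empty)
  then have "interior P \<noteq> {}" using interior_rel_interior_gen[of P] assms(2) by simp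
  then obtain x where "x \<in> interior P" by blast
  then obtain r where r: "r > 0" "ball x r \<subseteq> P" using mem_interior by blast
  have "x \<in> fine_adjoint P (r/2)"
    unfolding fine_adjoint_def
  proof (intro CollectI allI impI, elim conjE)
    fix a :: 'a assume a: "lattice_pt a" "a \<noteq> 0"
    have na: "norm a \<ge> 1" by (rule lat_norm[OF a])
    define p where "p = x - (r / (2 * norm a)) *\<^sub>R a"
    have "dist x p = r / 2" unfolding p_def using na r a(2) by (simp add: dist_norm)
    then have "p \<in> P" using r by auto
    then have hp: "support_min P a \<le> a \<bullet> p" using supp_attained[OF assms(1), of a] by force
    have "a \<bullet> p = a \<bullet> x - (r / (2 * norm a)) * (a \<bullet> a)" unfolding p_def
      by (simp add: inner_diff_right)
    also have "(a \<bullet> a) = norm a * norm a" by (simp add: dot_square_norm power2_eq_square)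
    finally have "a \<bullet> p = a \<bullet> x - r / 2 * norm a" using na by simp
    moreover have "r / 2 * norm a \<ge> r / 2" using na r by simp
    ultimately show "support_min P a + r / 2 \<le> a \<bullet> x" using hp by linarith
  qed
  then show ?thesis using r by (intro exI[of _ "r/2"]) auto
qed

lemma SP_bdd:
  fixes P :: "'a::euclidean_space set"
  assumes "lattice_polytope P"
  shows "bdd_above {s. s > 0 \<and> fine_adjoint P s \<noteq> {}}"
proof -
  obtain V where V: "finite V" "V \<noteq> {}" "P = convex hull V"
    using assms unfolding lattice_polytope_def by blast
  have "compact P" using V by (simp add: finite_imp_compact_convex_hull)
  then obtain M where M: "\<forall>p\<in>P. norm p \<le> M" using compact_imp_bounded bounded_iff by blast
  obtain b :: 'a where b: "b \<in> Basis" using nonempty_Basis by blast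
  have lb: "lattice_pt b" "lattice_pt (-b)" "b \<noteq> 0" "-b \<noteq> 0" using lat_Basis[OF b] b
    by (auto simp: nonzero_Basis)
  obtain v1 where v1: "v1 \<in> P" "support_min P b = b \<bullet> v1"
    using supp_attained[OF assms, of b] by blast
  obtain v2 where v2: "v2 \<in> P" "support_min P (-b) = (-b) \<bullet> v2"
    using supp_attained[OF assms, of "-b"] by blast
  have "\<bar>b \<bullet> v1\<bar> \<le> M" "\<bar>b \<bullet> v2\<bar> \<le> M"
    using Basis_le_norm[OF b, of v1] Basis_le_norm[OF b, of v2] M v1 v2
    by (auto simp: inner_commute)
  have "s \<le> M" if sp: "s > 0" "fine_adjoint P s \<noteq> {}" for s
  proof -
    obtain x where x: "x \<in> fine_adjoint P s" using sp(2) by blast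
    have "b \<bullet> x \<ge> support_min P b + s" "(-b) \<bullet> x \<ge> support_min P (-b) + s"
      using x lb unfolding fine_adjoint_def by auto
    then show ?thesis using v1 v2 \<open>\<bar>b \<bullet> v1\<bar> \<le> M\<close> \<open>\<bar>b \<bullet> v2\<bar> \<le> M\<close> by auto
  qed
  then show ?thesis unfolding bdd_above_def by blast
qed
lemma supp_zero: "lattice_polytope P \<Longrightarrow> support_min P 0 = 0"
  using supp_attained[of P 0] by auto

lemma int_cases_real: "(u::real) \<in> \<int> \<Longrightarrow> u \<ge> 0 \<or> u \<le> -1"
proof -
  assume "u \<in> \<int>"
  then obtain k where "u = of_int k" by (auto elim: Ints_cases)
  moreover have "k \<ge> 0 \<or> k \<le> -1" by linarith
  ultimately show ?thesis by auto
qed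

lemma int_nz_cases: "(u::real) \<in> \<int> \<Longrightarrow> u \<noteq> 0 \<Longrightarrow> u \<ge> 1 \<or> u \<le> -1"
proof -
  assume "u \<in> \<int>" "u \<noteq> 0"
  then obtain k where "u = of_int k" "k \<noteq> 0" by (auto elim: Ints_cases)
  moreover have "k \<ge> 1 \<or> k \<le> -1" using \<open>k \<noteq> 0\<close> by linarith
  ultimately show ?thesis by auto
qed

lemma fine_adjoint_mono: "r \<le> s \<Longrightarrow> fine_adjoint Q s \<subseteq> fine_adjoint Q r"
  unfolding fine_adjoint_def by force

lemma pyr_upper:
  fixes P :: "'a::euclidean_space set"
  assumes P: "lattice_polytope P" and s: "s > 0" and ne: "fine_adjoint (pyr P) s \<noteq> {}"
  shows "s \<le> 1/2 \<and> (\<exists>l. s \<le> l \<and> l \<le> 1 - s \<and> s / l > 0 \<and> fine_adjoint P (s / l) \<noteq> {})"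
proof -
  obtain z where z: "z \<in> fine_adjoint (pyr P) s" using ne by blast
  obtain y l where zyl: "z = (y, l)" by (cases z)
  have cond: "(a, t) \<bullet> (y, l) \<ge> min 0 (support_min P a + t) + s"
    if "lattice_pt a" "t \<in> \<int>" "(a, t) \<noteq> 0" for a t
    using z that unfolding zyl fine_adjoint_def by (auto simp: lat_prod pyr_supp[OF P])
  have l0: "lattice_pt (0::'a)" by (simp add: lattice_pt_def)
  have "(0::'a, 1::real) \<bullet> (y, l) \<ge> min 0 (support_min P 0 + 1) + s"
    by (rule cond) (use l0 in \<open>auto simp: zero_prod_def\<close>)
  then have ls: "l \<ge> s" by (simp add: supp_zero[OF P] inner_Pair)
  have "(0::'a, -1::real) \<bullet> (y, l) \<ge> min 0 (support_min P 0 + -1) + s"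
    by (rule cond) (use l0 in \<open>auto simp: zero_prod_def\<close>)
  then have lu: "l \<le> 1 - s" by (simp add: supp_zero[OF P] inner_Pair)
  have lpos: "l > 0" using ls s by linarith
  have "(1 / l) *\<^sub>R y \<in> fine_adjoint P (s / l)"
    unfolding fine_adjoint_def
  proof (intro CollectI allI impI, elim conjE)
    fix a :: 'a assume a: "lattice_pt a" "a \<noteq> 0"
    obtain v where v: "v \<in> P" "lattice_pt v" "support_min P a = a \<bullet> v"
      using supp_attained[OF P, of a] by blast
    have "- support_min P a \<in> \<int>" using lat_inner_int[OF a(1) v(2)] v(3) by simp
    then have "(a, - support_min P a) \<bullet> (y, l) \<ge> min 0 (support_min P a + - support_min P a) + s"
      using a by (intro cond) (auto simp: zero_prod_def)
    then have "a \<bullet> y - support_min P a * l \<ge> s" by (simp add: inner_Pair)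
    then have "(a \<bullet> y - support_min P a * l) / l \<ge> s / l" using lpos
      by (simp add: divide_right_mono)
    then show "support_min P a + s / l \<le> a \<bullet> (1 / l) *\<^sub>R y" using lpos
      by (simp add: diff_divide_distrib)
  qed
  then show ?thesis using ls lu lpos s by (intro conjI exI[of _ l]) auto
qed

lemma pyr_lower:
  fixes P :: "'a::euclidean_space set"
  assumes P: "lattice_polytope P" and s: "s > 0" and ne: "fine_adjoint P s \<noteq> {}"
  shows "fine_adjoint (pyr P) (min s 1 / (1 + min s 1)) \<noteq> {}"
proof -
  obtain x where x: "x \<in> fine_adjoint P s" using ne by blast
  define c where "c = min s 1"
  define lam where "lam = 1 / (1 + c)"
  have c: "c > 0" "c \<le> 1" "c \<le> s" using s unfolding c_def by auto
  have lam: "lam > 0" "lam * (1 + c) = 1" "1 - lam = c * lam" "c / (1 + c) = c * lam"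
    using c unfolding lam_def by (auto simp: field_simps)
  have lamle: "lam \<le> 1" using c unfolding lam_def by simp
  have "(lam *\<^sub>R x, lam) \<in> fine_adjoint (pyr P) (c / (1 + c))"
    unfolding fine_adjoint_def
  proof (intro CollectI allI impI, elim conjE)
    fix z :: "'a \<times> real" assume z: "lattice_pt z" "z \<noteq> 0"
    obtain a t where zat: "z = (a, t)" by (cases z)
    have at: "lattice_pt a" "t \<in> \<int>" "a \<noteq> 0 \<or> t \<noteq> 0" using z unfolding zat
      by (auto simp: lat_prod zero_prod_def)
    have lhs: "z \<bullet> (lam *\<^sub>R x, lam) = lam * (a \<bullet> x + t)" unfolding zat
      by (simp add: inner_Pair algebra_simps)
    show "support_min (pyr P) z + c / (1 + c) \<le> z \<bullet> (lam *\<^sub>R x, lam)"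
    proof (cases "a = 0")
      case True
      then have t0: "t \<ge> 1 \<or> t \<le> -1" using at int_nz_cases[of t] by auto
      have "min 0 t + c * lam \<le> lam * t"
      proof (cases "t \<ge> 1")
        case True
        then have "lam * t \<ge> lam * 1" using lam by (intro mult_left_mono) auto
        moreover have "c * lam \<le> 1 * lam" using c lam by (intro mult_right_mono) auto
        ultimately show ?thesis using True by simp
      next
        case False
        then have t1: "t \<le> -1" using t0 by auto
        have "(1 - lam) * (- t) \<ge> (1 - lam) * 1" using t1 lamle by (intro mult_left_mono) auto
        moreover have "lam * t - t = (1 - lam) * (- t)" by (simp add: algebra_simps)
        ultimately show ?thesis using t1 lam(3) by simp
      qed
      then show ?thesis using True lhs lam(4) unfolding zat
        by (simp add: pyr_supp[OF P] supp_zero[OF P] mult.commute)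
    next
      case False
      have ax: "a \<bullet> x \<ge> support_min P a + s" using x at False unfolding fine_adjoint_def by auto
      obtain v where v: "v \<in> P" "lattice_pt v" "support_min P a = a \<bullet> v"
        using supp_attained[OF P, of a] by blast
      define u where "u = support_min P a + t"
      have uint: "u \<in> \<int>" unfolding u_def using lat_inner_int[OF at(1) v(2)] v(3) at(2) by simp
      have "lam * (a \<bullet> x + t) \<ge> lam * (u + s)" using ax lam unfolding u_def
        by (intro mult_left_mono) auto
      moreover have "min 0 u + c * lam \<le> lam * (u + s)"
      proof (cases "u \<ge> 0")
        case True
        have "lam * (u + s) \<ge> lam * c" using True c lam by (intro mult_left_mono) auto
        then show ?thesis using True by (simp add: algebra_simps)
      next
        case False
        then have u1: "u \<le> -1" using int_cases_real[OF uint] by auto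
        have "(1 - lam) * (- u) \<ge> (1 - lam) * 1" using u1 lamle by (intro mult_left_mono) auto
        moreover have "lam * s \<ge> 0" using lam s by simp
        moreover have "lam * (u + s) - u = (1 - lam) * (- u) + lam * s" by (simp add: algebra_simps)
        ultimately show ?thesis using u1 lam(3) by simp
      qed
      ultimately show ?thesis using lhs lam(4) unfolding zat u_def
        by (simp add: pyr_supp[OF P])
    qed
  qed
  then show ?thesis unfolding c_def by blast
qed
lemma aux1: fixes r \<sigma> :: real assumes "r < 1/2" "r * (1 + \<sigma>) < \<sigma>" shows "r / (1 - r) < \<sigma>"
proof -
  have "r < \<sigma> * (1 - r)" using assms(2) by (simp add: algebra_simps)
  then show ?thesis using assms(1) by (simp add: divide_less_eq)
qed
lemma aux2: fixes r s :: real assumes "r < 1/2" "r / (1 - r) < s" "s > 0" shows "r < s / (1 + s)"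
proof -
  have "r < s * (1 - r)" using assms(1,2) by (simp add: divide_less_eq)
  then have "r * (1 + s) < s" by (simp add: algebra_simps)
  then show ?thesis using assms(3) by (simp add: less_divide_eq)
qed
lemma aux3: fixes s l \<sigma> :: real assumes "s / l \<le> \<sigma>" "l > 0" "l \<le> 1 - s" "\<sigma> > 0"
  shows "s \<le> \<sigma> / (1 + \<sigma>)"
proof -
  have "s \<le> \<sigma> * l" using assms(1,2) by (simp add: divide_le_eq mult.commute)
  also have "\<dots> \<le> \<sigma> * (1 - s)" using assms by (intro mult_left_mono) auto
  finally have "s * (1 + \<sigma>) \<le> \<sigma>" by (simp add: algebra_simps)
  then show ?thesis using assms(4) by (simp add: le_divide_eq)
qed
lemma aux4: fixes r \<sigma> :: real assumes "r < \<sigma> / (1 + \<sigma>)" "\<sigma> > 0" shows "r * (1 + \<sigma>) < \<sigma>"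
  using assms by (simp add: less_divide_eq)
lemma final_A: fixes \<sigma> g :: real assumes \<sigma>pos: "\<sigma> > 0" and True: "\<sigma> \<ge> 1" and g_def: "g = min (1/2) (\<sigma> / (1 + \<sigma>))"
  shows "inverse g = max 2 (inverse \<sigma> + 1)"
proof -
  have opos: "1 + \<sigma> > 0" using \<sigma>pos by simp
    have "1/2 \<le> \<sigma> / (1 + \<sigma>)" using opos True by (simp add: le_divide_eq)
    then have g2: "g = 1/2" unfolding g_def by simp
    have "inverse \<sigma> \<le> 1" using True by (simp add: inverse_le_1_iff)
    then show ?thesis unfolding g2 by simp
qed
lemma final_B: fixes \<sigma> g :: real assumes \<sigma>pos: "\<sigma> > 0" and False: "\<not> \<sigma> \<ge> 1" and g_def: "g = min (1/2) (\<sigma> / (1 + \<sigma>))"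
  shows "inverse g = max 2 (inverse \<sigma> + 1)"
proof -
  have opos: "1 + \<sigma> > 0" using \<sigma>pos by simp
    have "\<sigma> / (1 + \<sigma>) \<le> 1/2" using opos False by (simp add: divide_le_eq)
    then have "g = \<sigma> / (1 + \<sigma>)" unfolding g_def by simp
    then have "inverse g = (1 + \<sigma>) / \<sigma>" by simp
    also have "\<dots> = 1 / \<sigma> + \<sigma> / \<sigma>" by (rule add_divide_distrib)
    also have "\<dots> = inverse \<sigma> + 1" using \<sigma>pos by (simp add: divide_inverse)
    finally have "inverse g = inverse \<sigma> + 1" .
    moreover have "inverse \<sigma> \<ge> 1" using False \<sigma>pos by (simp add: one_le_inverse_iff)
    ultimately show ?thesis by simp
qed
theorem mainTheorem5:
  fixes P :: "'a::euclidean_space set"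
  assumes "lattice_polytope P"
    and "aff_dim P = int DIM('a)"
  shows "fine_codegree (pyr P) = max 2 (fine_codegree P + 1)"
proof -
  note P = assms(1)
  define SP where "SP = {s. s > 0 \<and> fine_adjoint P s \<noteq> {}}"
  define SQ where "SQ = {s. s > 0 \<and> fine_adjoint (pyr P) s \<noteq> {}}"
  define \<sigma> where "\<sigma> = Sup SP"
  define \<tau> where "\<tau> = Sup SQ"
  have SPne: "SP \<noteq> {}" using SP_nonempty[OF assms] unfolding SP_def by blast
  have SPb: "bdd_above SP" using SP_bdd[OF P] unfolding SP_def .
  obtain s0 where s0: "s0 \<in> SP" using SPne by blast
  have "s0 \<le> \<sigma>" unfolding \<sigma>_def using s0 SPb by (rule cSup_upper)
  then have \<sigma>pos: "\<sigma> > 0" using s0 unfolding SP_def by auto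
  define g where "g = min (1/2) (\<sigma> / (1 + \<sigma>))"
  have low: "min s 1 / (1 + min s 1) \<in> SQ" if "s \<in> SP" for s
    using pyr_lower[OF P, of s] that unfolding SP_def SQ_def
    by (auto intro!: divide_pos_pos)
  have up: "s \<le> g" if sQ: "s \<in> SQ" for s
  proof -
    obtain l where l: "s \<le> 1/2" "s \<le> l" "l \<le> 1 - s" "s / l > 0" "fine_adjoint P (s / l) \<noteq> {}"
      using pyr_upper[OF P, of s] sQ unfolding SQ_def by blast
    have "s / l \<in> SP" using l unfolding SP_def by auto
    then have sl: "s / l \<le> \<sigma>" unfolding \<sigma>_def using SPb by (rule cSup_upper)
    have lpos: "l > 0" using l sQ unfolding SQ_def by auto
    have "s \<le> \<sigma> / (1 + \<sigma>)" using aux3[OF sl lpos l(3) \<sigma>pos] .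
    then show ?thesis unfolding g_def using l by simp
  qed
  have SQne: "SQ \<noteq> {}" using low[OF s0] by blast
  have SQb: "bdd_above SQ" using up unfolding bdd_above_def by blast
  have down: "r \<in> SQ" if "s \<in> SQ" "0 < r" "r \<le> s" for r s
    using that fine_adjoint_mono[of r s "pyr P"] unfolding SQ_def by auto
  have \<tau>le: "\<tau> \<le> g" unfolding \<tau>_def using SQne up by (rule cSup_least)
  have \<tau>ge: "\<tau> \<ge> g"
  proof (rule ccontr)
    assume "\<not> \<tau> \<ge> g"
    then have lt: "\<tau> < g" by simp
    obtain q0 where q0: "q0 \<in> SQ" using SQne by blast
    have "q0 \<le> \<tau>" unfolding \<tau>_def using q0 SQb by (rule cSup_upper)
    then have \<tau>pos: "\<tau> > 0" using q0 unfolding SQ_def by auto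
    define r where "r = (\<tau> + g) / 2"
    have r: "r > 0" "r < g" "r > \<tau>" using lt \<tau>pos unfolding r_def by auto
    have r2: "r < 1/2" "r < \<sigma> / (1 + \<sigma>)" using r(2) unfolding g_def by auto
    have "r / (1 - r) < \<sigma>" using aux1[OF r2(1) aux4[OF r2(2) \<sigma>pos]] .
    then obtain s' where s': "s' \<in> SP" "r / (1 - r) < s'"
      using less_cSup_iff[OF SPne SPb] unfolding \<sigma>_def by blast
    have "r \<le> min s' 1 / (1 + min s' 1)"
    proof (cases "s' \<ge> 1")
      case True then show ?thesis using r2 by simp
    next
      case False
      have "s' > 0" using s'(1) unfolding SP_def by simp
      then have "r < s' / (1 + s')" using aux2[OF r2(1) s'(2)] by simp
      then show ?thesis using False by simp
    qed
    then have "r \<in> SQ" using down[OF low[OF s'(1)] r(1)] by blast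
    then have "r \<le> \<tau>" unfolding \<tau>_def using SQb by (rule cSup_upper)
    then show False using r(3) by simp
  qed
  have \<tau>g: "\<tau> = g" using \<tau>le \<tau>ge by simp
  have fP: "fine_codegree P = inverse \<sigma>" unfolding fine_codegree_def \<sigma>_def SP_def ..
  have fQ: "fine_codegree (pyr P) = inverse g" unfolding fine_codegree_def \<tau>g[symmetric] \<tau>_def SQ_def ..
  show ?thesis
  proof (cases "\<sigma> \<ge> 1")
    case True
    show ?thesis unfolding fP fQ using final_A[OF \<sigma>pos True g_def] by simp
  next
    case False
    show ?thesis unfolding fP fQ using final_B[OF \<sigma>pos False g_def] by simp
  qed
qed

end
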